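(* There is an absolute constant $C$ such that for all $x,u\in\mathbb R$, \[\sup_{0<t\le1}K_t(x,u)\,\bigl(1-\eta((1+|x|)|x-u|)\bigr)\le C\,e^{R(x)}(1+|x|).\]
   Context: $R(x)=x^2/2$. $K_t(x,u)=\frac{e^{R(x)}}{\sqrt{1-e^{-2t}}}\exp\bigl(-\frac12\frac{(e^{-t}u-x)^2}{1-e^{-2t}}\bigr)$. $\eta\ge0$ is a fixed smooth function on $[0,\infty)$ with $\eta=1$ on $[0,1/2]$ and $\eta=0$ on $[1,\infty)$ (with $0\le\eta\le1$). *)

theory Defs
  imports "HOL-Analysis.Analysis"
begin

definition R :: "real \<Rightarrow> real" where
  "R x = x^2 / 2"

definition K :: "real \<Rightarrow> real \<Rightarrow> real \<Rightarrow> real" where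
  "K t x u = exp (R x) / sqrt (1 - exp (-2*t)) *
      exp (-(1/2) * (exp (-t) * u - x)^2 / (1 - exp (-2*t)))"

definition smooth_on :: "real set \<Rightarrow> (real \<Rightarrow> real) \<Rightarrow> bool" where
  "smooth_on S f \<longleftrightarrow> (\<forall>n. \<forall>x\<in>S. ((deriv ^^ n) f) differentiable (at x))"

text \<open>Admissible cutoff: smooth on [0,inf) (smooth on (0,inf) and continuous at 0 from the right;
  it is constant on [0,1/2] anyway), 0<=eta<=1, eta=1 on [0,1/2], eta=0 on [1,inf).\<close>
definition cutoff :: "(real \<Rightarrow> real) \<Rightarrow> bool" where
  "cutoff \<eta> \<longleftrightarrow> smooth_on {0<..} \<eta> \<and> continuous_on {0..} \<eta> \<and>
     (\<forall>s\<ge>0. 0 \<le> \<eta> s \<and> \<eta> s \<le> 1) \<and>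
     (\<forall>s\<in>{0..1/2}. \<eta> s = 1) \<and> (\<forall>s\<ge>1. \<eta> s = 0)"

end

theory Submission
  imports Defs
begin

lemma zexp: "z \<ge> 0 \<Longrightarrow> z * exp (-(z^2/2)) \<le> (1::real)"
proof -
  assume z: "z \<ge> 0"
  have "1 + z^2/2 \<le> exp (z^2/2)" by (rule exp_ge_add_one_self)
  moreover have "z \<le> 1 + z^2/2" using sum_squares_ge_zero[of "z-1" 0]
    by (simp add: power2_eq_square algebra_simps)
  ultimately have "z \<le> exp (z^2/2)" by linarith
  thus ?thesis by (simp add: exp_minus field_simps)
qed

lemma gauss_bound:
  fixes a r :: real assumes r: "r > 0" and a: "a \<noteq> 0"
  shows "exp (-(1/2) * a^2 / r^2) / r \<le> 1 / \<bar>a\<bar>"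
proof -
  define z where "z = \<bar>a\<bar> / r"
  have z0: "z \<ge> 0" using r by (simp add: z_def)
  have e: "-(1/2) * a^2 / r^2 = -(z^2/2)" using r
    by (simp add: z_def power_divide)
  have "z * exp (-(z^2/2)) \<le> 1" using zexp[OF z0] .
  hence "\<bar>a\<bar> * exp (-(z^2/2)) / r \<le> 1" by (simp add: z_def)
  hence "exp (-(z^2/2)) / r * \<bar>a\<bar> \<le> 1" by (simp add: field_simps)
  hence "exp (-(z^2/2)) / r \<le> 1 / \<bar>a\<bar>" using a by (simp add: field_simps)
  thus ?thesis using e by metis
qed

lemma core:
  fixes t x u :: real
  assumes t: "0 < t" "t \<le> 1" and far: "(1 + \<bar>x\<bar>) * \<bar>x - u\<bar> > 1/2"
  shows "exp (-(1/2) * (exp (-t) * u - x)^2 / (1 - exp (-2*t))) / sqrt (1 - exp (-2*t))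
         \<le> 5 * (1 + \<bar>x\<bar>)"
proof -
  define D where "D = 1 + \<bar>x\<bar>"
  define a where "a = exp (-t) * u - x"
  define s where "s = 1 - exp (-2*t)"
  define r where "r = sqrt s"
  have D1: "D \<ge> 1" by (simp add: D_def)
  have s0: "s > 0" using t by (simp add: s_def)
  have r0: "r > 0" using s0 by (simp add: r_def)
  have rs: "r^2 = s" using s0 by (simp add: r_def)
  have dist: "\<bar>x - u\<bar> > 1/(2*D)" using far D1 by (simp add: D_def field_simps)
  show ?thesis
  proof (cases "\<bar>a\<bar> \<ge> 1/(4*D)")
    case True
    hence an: "a \<noteq> 0" using D1 by auto
    have "exp (-(1/2) * a^2 / r^2) / r \<le> 1/\<bar>a\<bar>" by (rule gauss_bound[OF r0 an])
    also have "\<dots> \<le> 4 * D" using True D1 an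
      by (simp add: field_simps)
    also have "\<dots> \<le> 5 * D" using D1 by simp
    finally have "exp (-(1/2) * a^2 / r^2) / r \<le> 5 * D" .
    hence "exp (-(1/2) * a^2 / s) / r \<le> 5 * D" by (simp only: rs)
    thus ?thesis by (simp add: a_def s_def r_def D_def)
  next
    case False
    hence asm: "\<bar>a\<bar> < 1/(4*D)" by simp
    have "\<bar>a\<bar> * 4 \<le> D * (\<bar>a\<bar> * 4)" using D1 by (simp add: mult_le_cancel_right1)
    hence a14: "\<bar>a\<bar> < 1/4" using asm D1 by (simp add: field_simps)
    have et: "exp (-t) * \<bar>u\<bar> < D"
    proof -
      have "exp (-t) * \<bar>u\<bar> = \<bar>a + x\<bar>" by (simp add: a_def abs_mult)
      also have "\<dots> \<le> \<bar>a\<bar> + \<bar>x\<bar>" by (rule abs_triangle_ineq)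
      finally show ?thesis using a14 by (simp add: D_def)
    qed
    have eu: "exp t \<le> 3" using t
      using exp_le exp_le_cancel_iff[of t 1] by linarith
    have u3: "\<bar>u\<bar> \<le> 3 * D"
    proof -
      have "\<bar>u\<bar> = exp t * (exp (-t) * \<bar>u\<bar>)" by (simp add: exp_minus)
      also have "\<dots> \<le> 3 * D" using eu et
        by (intro mult_mono) auto
      finally show ?thesis .
    qed
    have diff: "x - u = -a - (1 - exp (-t)) * u" by (simp add: a_def algebra_simps)
    have c0: "1 - exp (-t) \<ge> 0" using t by simp
    have "\<bar>x - u\<bar> = \<bar>-a - (1 - exp (-t)) * u\<bar>" by (simp only: diff)
    also have "\<dots> \<le> \<bar>-a\<bar> + \<bar>(1 - exp (-t)) * u\<bar>" by (rule abs_triangle_ineq4)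
    also have "\<dots> = \<bar>a\<bar> + (1 - exp (-t)) * \<bar>u\<bar>" using c0 by (simp add: abs_mult)
    finally have tri: "\<bar>x - u\<bar> \<le> \<bar>a\<bar> + (1 - exp (-t)) * \<bar>u\<bar>" .
    have hh: "1/(2*D) = 1/(4*D) + 1/(4*D)" using D1 by (simp add: field_simps)
    have big: "(1 - exp (-t)) * \<bar>u\<bar> > 1/(4*D)" using dist asm tri hh by linarith
    have et1: "1 - exp (-t) \<le> t" using exp_ge_add_one_self[of "-t"] by simp
    have "t * (3*D) \<ge> (1 - exp (-t)) * \<bar>u\<bar>" using et1 u3 t c0
      by (intro mult_mono) auto
    hence "t * (3*D) > 1/(4*D)" using big by linarith
    hence "t * (3*D) / (3*D) > (1/(4*D)) / (3*D)" using D1 by (intro divide_strict_right_mono) auto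
    hence tb: "t > 1/(12*D^2)" using D1 by (simp add: power2_eq_square)
    have e2: "exp (2*t) \<ge> 1 + 2*t" using exp_ge_add_one_self[of "2*t"] by simp
    have "s = 1 - 1/exp (2*t)" by (simp add: s_def exp_minus inverse_eq_divide)
    also have "1/exp (2*t) \<le> 1/(1+2*t)" using e2 t
      by (intro divide_left_mono) auto
    hence "1 - 1/exp (2*t) \<ge> 1 - 1/(1+2*t)" by linarith
    finally have "s \<ge> 1 - 1/(1+2*t)" .
    moreover have "1 - 1/(1+2*t) = 2*t/(1+2*t)" using t by (simp add: field_simps)
    moreover have "2*t/(1+2*t) \<ge> 2*t/3" using t by (intro divide_left_mono) auto
    ultimately have "s \<ge> 2*t/3" by linarith
    moreover have "2*t/3 \<ge> 2*(1/(12*D^2))/3" using tb by simp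
    moreover have "2*(1/(12*D^2))/3 \<ge> 1/(25*D^2)" using D1 by (simp add: field_simps)
    ultimately have sb: "s \<ge> (1/(5*D))^2" by (simp add: power_divide power_mult_distrib)
    hence "sqrt ((1/(5*D))^2) \<le> sqrt s" by (rule real_sqrt_le_mono)
    hence rb: "1/(5*D) \<le> r" using D1 by (simp add: r_def)
    have "exp (-(1/2) * a^2 / s) \<le> 1" using s0 by simp
    hence "exp (-(1/2) * a^2 / s) / r \<le> 1 / r" using r0 by (simp add: divide_right_mono)
    also have "\<dots> \<le> 5 * D" using rb r0 D1 by (simp add: field_simps)
    finally show ?thesis by (simp add: a_def s_def r_def D_def)
  qed
qed

theorem mainTheorem8:
  fixes \<eta> :: "real \<Rightarrow> real"
  assumes "cutoff \<eta>"
  shows "\<exists>C. \<forall>x u. \<forall>t\<in>{0<..1}.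
           K t x u * (1 - \<eta> ((1 + \<bar>x\<bar>) * \<bar>x - u\<bar>)) \<le> C * exp (R x) * (1 + \<bar>x\<bar>)"
proof (intro exI allI ballI)
  fix x u t :: real assume t: "t \<in> {0<..1}"
  define w where "w = (1 + \<bar>x\<bar>) * \<bar>x - u\<bar>"
  have w0: "w \<ge> 0" by (simp add: w_def)
  have eb: "0 \<le> \<eta> w" "\<eta> w \<le> 1" using assms w0 by (auto simp: cutoff_def)
  have s0: "1 - exp (-2*t) > 0" using t by simp
  have K0: "K t x u \<ge> 0" using s0 by (simp add: K_def)
  have rhs0: "0 \<le> 5 * exp (R x) * (1 + \<bar>x\<bar>)" by simp
  show "K t x u * (1 - \<eta> ((1 + \<bar>x\<bar>) * \<bar>x - u\<bar>)) \<le> 5 * exp (R x) * (1 + \<bar>x\<bar>)"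
  proof (cases "w \<le> 1/2")
    case True
    hence "\<eta> w = 1" using assms w0 by (auto simp: cutoff_def)
    thus ?thesis using rhs0 by (simp add: w_def)
  next
    case False
    have c: "exp (-(1/2) * (exp (-t) * u - x)^2 / (1 - exp (-2*t))) / sqrt (1 - exp (-2*t))
         \<le> 5 * (1 + \<bar>x\<bar>)" using t False by (intro core) (auto simp: w_def)
    have "K t x u = exp (R x) * (exp (-(1/2) * (exp (-t) * u - x)^2 / (1 - exp (-2*t))) / sqrt (1 - exp (-2*t)))"
      by (simp add: K_def)
    also have "\<dots> \<le> exp (R x) * (5 * (1 + \<bar>x\<bar>))" using c by (intro mult_left_mono) auto
    finally have "K t x u \<le> 5 * exp (R x) * (1 + \<bar>x\<bar>)" by (simp add: algebra_simps)
    moreover have "K t x u * (1 - \<eta> w) \<le> K t x u" using K0 eb by (simp add: mult_left_le)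
    ultimately show ?thesis by (simp add: w_def)
  qed
qed

end
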